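(* Let $\mathcal{X},\mathcal{Y}$ be finite Markov chains and $C:{\bm X}\times{\bm Y}\to\mathbb{R}_+$ a cost function. Let $p\in\mathcal{P}(\mathbb{N})$ and let $(p_k)_{k\in\mathbb{N}}\subseteq\mathcal{P}(\mathbb{N})$ satisfy $\lim_{k\to\infty}d_{\mathrm{TV}}(p_k,p)=0$, where $d_{\mathrm{TV}}$ is the total variation distance. Then $\lim_{k\to\infty}d^{p_k}_{\mathrm{OTM}}(\mathcal{X},\mathcal{Y};C)=d^{p}_{\mathrm{OTM}}(\mathcal{X},\mathcal{Y};C)$.
   Context: A finite Markov chain $\mathcal{X}=({\bm X},m^{\bm X}_\bullet,\nu^{\bm X})$ consists of a finite set ${\bm X}$, a transition kernel $m^{\bm X}_\bullet:{\bm X}\to\mathcal{P}({\bm X})$ and an initial distribution $\nu^{\bm X}$. $\mathcal{C}(\alpha,\beta)$ denotes the set of couplings of $\alpha,\beta$. A Markovian coupling between $\mathcal{X}$ and $\mathcal{Y}$ is a (possibly time-inhomogeneous) Markov chain $(X_t,Y_t)_{t\in\mathbb{N}}$ on ${\bm X}\times{\bm Y}$ with $\mathrm{law}(X_0,Y_0)\in\mathcal{C}(\nu^{\bm X},\nu^{\bm Y})$ and, for all $t,x,y$, the conditional law of $(X_{t+1},Y_{t+1})$ given $(X_t,Y_t)=(x,y)$ in $\mathcal{C}(m^{\bm X}_x,m^{\bm Y}_y)$. For $q\in\mathcal{P}(\mathbb{N})$ and $T\sim q$, $d^{q}_{\mathrm{OTM}}(\mathcal{X},\mathcal{Y};C)=\inf\mathbb{E}\,C(X_T,Y_T)$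 over all Markovian couplings independent of $T$. *)

theory Defs
  imports "HOL-Probability.Probability"
begin

text \<open>A finite Markov chain is given by a finite state type, a transition kernel
  and an initial distribution.  Couplings of two pmfs:\<close>

definition is_coupling :: "('a \<times> 'b) pmf \<Rightarrow> 'a pmf \<Rightarrow> 'b pmf \<Rightarrow> bool" where
  "is_coupling \<pi> \<alpha> \<beta> \<longleftrightarrow> map_pmf fst \<pi> = \<alpha> \<and> map_pmf snd \<pi> = \<beta>"

definition markovian_coupling ::
  "('x \<Rightarrow> 'x pmf) \<Rightarrow> 'x pmf \<Rightarrow> ('y \<Rightarrow> 'y pmf) \<Rightarrow> 'y pmf \<Rightarrow>
   ('x \<times> 'y) pmf \<Rightarrow> (nat \<Rightarrow> 'x \<times> 'y \<Rightarrow> ('x \<times> 'y) pmf) \<Rightarrow> bool" where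
  "markovian_coupling mX nuX mY nuY \<pi>0 K \<longleftrightarrow>
     is_coupling \<pi>0 nuX nuY \<and> (\<forall>t x y. is_coupling (K t (x, y)) (mX x) (mY y))"

primrec coupling_law ::
  "('x \<times> 'y) pmf \<Rightarrow> (nat \<Rightarrow> 'x \<times> 'y \<Rightarrow> ('x \<times> 'y) pmf) \<Rightarrow> nat \<Rightarrow> ('x \<times> 'y) pmf" where
  "coupling_law \<pi>0 K 0 = \<pi>0"
| "coupling_law \<pi>0 K (Suc t) = bind_pmf (coupling_law \<pi>0 K t) (K t)"

text \<open>d^q_OTM: infimum over Markovian couplings (independent of T \<sim> q) of
  E C(X_T, Y_T) = E_{T\<sim>q} [ E C(X_T,Y_T) | T ].\<close>

definition d_OTM ::
  "nat pmf \<Rightarrow> ('x \<Rightarrow> 'x pmf) \<Rightarrow> 'x pmf \<Rightarrow> ('y \<Rightarrow> 'y pmf) \<Rightarrow> 'y pmf \<Rightarrow>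
   ('x \<Rightarrow> 'y \<Rightarrow> real) \<Rightarrow> real" where
  "d_OTM q mX nuX mY nuY C =
     (INF \<pi>K \<in> {(\<pi>0, K). markovian_coupling mX nuX mY nuY \<pi>0 K}.
        measure_pmf.expectation q
          (\<lambda>t. measure_pmf.expectation (coupling_law (fst \<pi>K) (snd \<pi>K) t)
                 (\<lambda>(x, y). C x y)))"

definition d_TV :: "nat pmf \<Rightarrow> nat pmf \<Rightarrow> real" where
  "d_TV p q = (SUP A. \<bar>measure_pmf.prob p A - measure_pmf.prob q A\<bar>)"

end

theory Submission
  imports Defs
begin

lemma exp_infsetsum:
  fixes f :: "nat \<Rightarrow> real"
  assumes "\<And>n. \<bar>f n\<bar> \<le> M"
  shows "measure_pmf.expectation q f = infsetsum (\<lambda>n. pmf q n * f n) UNIV"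
    and "Infinite_Set_Sum.abs_summable_on (\<lambda>n. pmf q n * f n) UNIV"
proof -
  show S: "Infinite_Set_Sum.abs_summable_on (\<lambda>n. pmf q n * f n) UNIV"
  proof (rule abs_summable_on_comparison_test)
    show "Infinite_Set_Sum.abs_summable_on (\<lambda>n. pmf q n * M) UNIV" by (intro abs_summable_on_cmult_left pmf_abs_summable)
    show "\<And>x. x \<in> UNIV \<Longrightarrow> norm (pmf q x * f x) \<le> norm (pmf q x * M)"
      using assms by (auto simp: abs_mult intro!: mult_left_mono intro: order_trans[OF _ abs_ge_self])
  qed
  show "measure_pmf.expectation q f = infsetsum (\<lambda>n. pmf q n * f n) UNIV"
    unfolding measure_pmf_eq_density infsetsum_def
    by (subst integral_density) (auto simp: pmf_nonneg)
qed

lemma d_TV_sym: "d_TV p q = d_TV q p"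
  unfolding d_TV_def by (simp add: abs_minus_commute)

lemma d_TV_upper: "\<bar>measure_pmf.prob p A - measure_pmf.prob q A\<bar> \<le> d_TV p q"
  unfolding d_TV_def
proof (rule cSUP_upper)
  show "bdd_above (range (\<lambda>A. \<bar>measure_pmf.prob p A - measure_pmf.prob q A\<bar>))"
    using measure_pmf.prob_le_1 measure_nonneg by (intro bdd_aboveI[of _ 1]) (auto simp: abs_le_iff, (smt (verit) measure_pmf.prob_le_1 measure_nonneg)+)
qed simp

lemma exp_diff:
  fixes f :: "nat \<Rightarrow> real"
  assumes "\<And>n. 0 \<le> f n" "\<And>n. f n \<le> M"
  shows "measure_pmf.expectation q f - measure_pmf.expectation p f \<le> M * d_TV q p"
proof -
  have b: "\<And>n. \<bar>f n\<bar> \<le> M" using assms by (smt (verit) assms)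
  define A where "A = {n. pmf q n \<ge> pmf p n}"
  define g where "g = (\<lambda>n. pmf q n * f n - pmf p n * f n)"
  have sq: "Infinite_Set_Sum.abs_summable_on (\<lambda>n. pmf q n * f n) UNIV" and sp: "Infinite_Set_Sum.abs_summable_on (\<lambda>n. pmf p n * f n) UNIV"
    using exp_infsetsum(2)[of f M, OF b] by blast+
  have sg: "Infinite_Set_Sum.abs_summable_on g UNIV" unfolding g_def using sq sp by (intro abs_summable_on_diff)
  have "measure_pmf.expectation q f - measure_pmf.expectation p f = infsetsum g UNIV"
    unfolding g_def using exp_infsetsum[of f M, OF b] by (simp add: infsetsum_diff)
  also have "\<dots> = infsetsum g A + infsetsum g (-A)"
    using sg by (subst infsetsum_Un_disjoint[symmetric]) (auto intro: abs_summable_on_subset)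
  also have "infsetsum g (-A) \<le> infsetsum (\<lambda>_. 0) (-A)"
    using sg assms unfolding g_def A_def
    by (intro infsetsum_mono) (auto intro: abs_summable_on_subset mult_right_mono simp: left_diff_distrib[symmetric] mult_nonpos_nonneg)
  also have "infsetsum g A \<le> infsetsum (\<lambda>n. M * (pmf q n - pmf p n)) A"
  proof (rule infsetsum_mono)
    show "Infinite_Set_Sum.abs_summable_on g A" using sg by (auto intro: abs_summable_on_subset)
    show "Infinite_Set_Sum.abs_summable_on (\<lambda>n. M * (pmf q n - pmf p n)) A"
      by (intro abs_summable_on_cmult_right abs_summable_on_diff pmf_abs_summable)
    show "\<And>x. x \<in> A \<Longrightarrow> g x \<le> M * (pmf q x - pmf p x)"
      using assms unfolding g_def A_def by (auto simp: right_diff_distrib[symmetric] left_diff_distrib[symmetric] mult.commute[of M] intro: mult_left_mono)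
  qed
  also have "\<dots> = M * (measure_pmf.prob q A - measure_pmf.prob p A)"
    by (simp add: infsetsum_cmult_right[OF abs_summable_on_diff[OF pmf_abs_summable pmf_abs_summable]] infsetsum_diff[OF pmf_abs_summable pmf_abs_summable] measure_pmf_conv_infsetsum)
  also have "\<dots> \<le> M * d_TV q p"
  proof -
    have "0 \<le> M" using assms(1)[of 0] assms(2)[of 0] by simp
    then show ?thesis using d_TV_upper[of q A p] by (intro mult_left_mono) auto
  qed
  finally show ?thesis by simp
qed


lemma INF_shift:
  fixes F G :: "'c \<Rightarrow> real"
  assumes "S \<noteq> {}" "\<And>c. c \<in> S \<Longrightarrow> 0 \<le> F c" "\<And>c. c \<in> S \<Longrightarrow> F c \<le> G c + D"
  shows "(INF c\<in>S. F c) \<le> (INF c\<in>S. G c) + D"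
proof -
  have "(INF c\<in>S. F c) - D \<le> (INF c\<in>S. G c)"
  proof (rule cINF_greatest[OF assms(1)])
    fix c assume c: "c \<in> S"
    have "(INF c\<in>S. F c) \<le> F c"
      by (rule cINF_lower[OF _ c]) (auto intro!: bdd_belowI[of _ 0] assms(2))
    then show "(INF c\<in>S. F c) - D \<le> G c" using assms(3)[OF c] by simp
  qed
  then show ?thesis by simp
qed

theorem lemma9:
  fixes mX :: "'x::finite \<Rightarrow> 'x pmf" and nuX :: "'x pmf"
    and mY :: "'y::finite \<Rightarrow> 'y pmf" and nuY :: "'y pmf"
    and C :: "'x \<Rightarrow> 'y \<Rightarrow> real"
    and p :: "nat pmf" and ps :: "nat \<Rightarrow> nat pmf"
  assumes "\<And>x y. C x y \<ge> 0"
    and "(\<lambda>k. d_TV (ps k) p) \<longlonglongrightarrow> 0"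
  shows "(\<lambda>k. d_OTM (ps k) mX nuX mY nuY C) \<longlonglongrightarrow> d_OTM p mX nuX mY nuY C"
proof -
  define M where "M = Max (range (\<lambda>(x,y). C x y))"
  have CM: "C x y \<le> M" for x y unfolding M_def by (rule Max_ge) auto
  have M0: "0 \<le> M" using CM[of undefined undefined] assms(1)[of undefined undefined] by simp
  define S where "S = {(\<pi>0, K). markovian_coupling mX nuX mY nuY \<pi>0 K}"
  define f where "f = (\<lambda>\<pi>K t. measure_pmf.expectation (coupling_law (fst \<pi>K) (snd \<pi>K) t)
                 (\<lambda>(x, y). C x y))"
  have f0: "0 \<le> f c t" for c t unfolding f_def
    by (rule integral_nonneg_AE) (auto simp: assms(1))
  have fM: "f c t \<le> M" for c t unfolding f_def
    by (rule measure_pmf.integral_le_const) (auto intro!: integrable_measure_pmf_finite CM)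
  define E where "E = (\<lambda>q c. measure_pmf.expectation q (f c))"
  have dE: "d_OTM q mX nuX mY nuY C = (INF c\<in>S. E q c)" for q
    unfolding d_OTM_def S_def E_def f_def by simp
  have Sne: "S \<noteq> {}"
  proof -
    have "(pair_pmf nuX nuY, \<lambda>t (x,y). pair_pmf (mX x) (mY y)) \<in> S"
      unfolding S_def markovian_coupling_def is_coupling_def
      by (simp add: map_fst_pair_pmf map_snd_pair_pmf)
    then show ?thesis by blast
  qed
  have E0: "0 \<le> E q c" for q c unfolding E_def by (rule integral_nonneg_AE) (auto intro: f0)
  have key: "d_OTM q mX nuX mY nuY C \<le> d_OTM q' mX nuX mY nuY C + M * d_TV q q'" for q q'
  proof -
    have "E q c \<le> E q' c + M * d_TV q q'" for c
      using exp_diff[of "f c" M q q'] f0 fM unfolding E_def by simp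
    then show ?thesis unfolding dE by (rule INF_shift[OF Sne E0])
  qed
  have bound: "norm (d_OTM (ps k) mX nuX mY nuY C - d_OTM p mX nuX mY nuY C) \<le> M * d_TV (ps k) p" for k
    using key[of "ps k" p] key[of p "ps k"] d_TV_sym[of p "ps k"] by auto
  have "(\<lambda>k. d_OTM (ps k) mX nuX mY nuY C - d_OTM p mX nuX mY nuY C) \<longlonglongrightarrow> 0"
  proof (rule Lim_null_comparison)
    show "\<forall>\<^sub>F k in sequentially. norm (d_OTM (ps k) mX nuX mY nuY C - d_OTM p mX nuX mY nuY C) \<le> M * d_TV (ps k) p"
      using bound by simp
    show "(\<lambda>k. M * d_TV (ps k) p) \<longlonglongrightarrow> 0" using tendsto_mult_right_zero[OF assms(2)] by simp
  qed
  then show ?thesis by (simp add: LIM_zero_iff)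
qed

end
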